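(* Let $(M,\rho)$ be a complete metric space and let $f,g:M\to\mathbb{R}\cup\{+\infty\}$ be proper and lower semicontinuous, with $f$ bounded below. Assume that for every $x\in\operatorname{dom}|\widetilde\nabla f|$ we have $x\in\operatorname{dom} g$ and $$|\widetilde\nabla g|(x)\le|\widetilde\nabla f|(x).$$ Then $$\inf_{x\in\operatorname{dom} f}(f(x)-g(x))\ge\inf_M f-\inf_M g.$$ In particular $\inf_M g>-\infty$, and $f(x)-\inf_M f\ge g(x)-\inf_M g$ for all $x\in M$.
   Context: $\operatorname{dom} f:=\{x:f(x)<+\infty\}$; $f$ proper if $\operatorname{dom} f\ne\varnothing$; on $\operatorname{dom} f$, $f(x)-g(x)=-\infty$ if $g(x)=+\infty$. $[t]^+:=\max\{0,t\}$ (with $[f(x)-f(y)]^+:=0$ if $f(y)=+\infty$). For $x\in\operatorname{dom} f$, the global slope is $|\widetilde\nabla f|(x):=\sup_{y\neq x}\frac{[f(x)-f(y)]^+}{\rho(x,y)}\in[0,+\infty]$, and $\operatorname{dom}|\widetilde\nabla f|:=\{x\in\operatorname{dom} f:\ |\widetilde\nabla f|(x)<+\infty\}$. *)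

theory Defs
  imports "HOL-Analysis.Analysis"
begin

definition lower_semicont :: "('a::metric_space \<Rightarrow> ereal) \<Rightarrow> bool" where
  "lower_semicont f \<longleftrightarrow> (\<forall>x. f x \<le> Liminf (at x) f)"

definition edom :: "('a \<Rightarrow> ereal) \<Rightarrow> 'a set" where
  "edom f = {x. f x < \<infinity>}"

text \<open>For x in the domain of f,
  f y = infinity gives f x - f y = -infinity and hence [.]^+ = 0, as in the paper's convention.\<close>
definition global_slope :: "('a::metric_space \<Rightarrow> ereal) \<Rightarrow> 'a \<Rightarrow> ereal" where
  "global_slope f x = (SUP y. if y = x then 0 else max 0 (f x - f y) / ereal (dist x y))"

definition slope_dom :: "('a::metric_space \<Rightarrow> ereal) \<Rightarrow> 'a set" where
  "slope_dom f = {x \<in> edom f. global_slope f x < \<infinity>}"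

end

theory Submission
  imports Defs
begin

lemma slope_nonneg: "0 \<le> global_slope f x"
  unfolding global_slope_def by (rule SUP_upper2[where i=x]) auto

lemma slope_le_ereal:
  fixes f :: "'a::metric_space \<Rightarrow> ereal"
  assumes "0 \<le> L" and "\<And>y. y \<noteq> x \<Longrightarrow> f x \<le> f y + ereal (L * dist x y)"
    and fin: "f x \<noteq> \<infinity>" "f x \<noteq> -\<infinity>"
  shows "global_slope f x \<le> ereal L"
  unfolding global_slope_def
proof (rule SUP_least)
  fix y show "(if y = x then 0 else max 0 (f x - f y) / ereal (dist x y)) \<le> ereal L"
  proof (cases "y = x")
    case True then show ?thesis using assms by simp
  next
    case False
    then have d: "dist x y > 0" by simp
    have "max 0 (f x - f y) \<le> ereal (dist x y) * ereal L"
    proof -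
      have "f x - f y \<le> ereal (L * dist x y)"
        using assms(2)[OF False] fin
        by (cases "f x"; cases "f y") (auto simp: ereal_minus_le_iff)
      moreover have "0 \<le> ereal (L * dist x y)" using assms(1) by simp
      ultimately show ?thesis by (simp add: mult.commute)
    qed
    then have "max 0 (f x - f y) / ereal (dist x y) \<le> ereal L"
      using d by (subst ereal_divide_le_pos) auto
    then show ?thesis using False by simp
  qed
qed

lemma slope_use:
  fixes f :: "'a::metric_space \<Rightarrow> ereal"
  assumes "global_slope f x \<le> ereal L" "f x \<noteq> \<infinity>" "f x \<noteq> -\<infinity>"
  shows "f x - f y \<le> ereal (L * dist x y)"
proof (cases "y = x")
  case True
  have "0 \<le> ereal L" using slope_nonneg[of f x] assms(1) by (metis order.trans)
  then show ?thesis using True assms(2,3) by (cases "f x") auto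
next
  case False
  then have d: "dist x y > 0" by simp
  have "max 0 (f x - f y) / ereal (dist x y) \<le> global_slope f x"
    unfolding global_slope_def by (rule SUP_upper2[where i=y]) (use False in auto)
  also have "\<dots> \<le> ereal L" by fact
  finally have "max 0 (f x - f y) \<le> ereal (dist x y) * ereal L"
    using d by (subst (asm) ereal_divide_le_pos) auto
  then show ?thesis by (simp add: mult.commute)
qed


lemma lsc_seq:
  fixes f :: "'a::metric_space \<Rightarrow> ereal" and y :: "nat \<Rightarrow> 'a"
  assumes lsc: "lower_semicont f" and lim: "y \<longlonglongrightarrow> z"
    and le: "\<And>n. f (y n) \<le> ereal (b n)" and blim: "b \<longlonglongrightarrow> B"
  shows "f z \<le> ereal B"
proof (rule dense_le)
  fix t assume t: "t < f z"
  with lsc have "t < Liminf (at z) f" unfolding lower_semicont_def by (metis less_le_trans)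
  then have "eventually (\<lambda>u. t < f u) (at z)"
    using le_Liminf_iff[THEN iffD1, OF order_refl] by blast
  then obtain d where d: "d > 0" "\<And>u. u \<noteq> z \<and> dist u z < d \<longrightarrow> t < f u"
    unfolding eventually_at by auto
  have d2: "\<And>u. dist u z < d \<Longrightarrow> t < f u" using d t by (metis)
  obtain N where N: "\<And>n. n \<ge> N \<Longrightarrow> dist (y n) z < d"
    using lim d(1) unfolding lim_sequentially by blast
  have ev: "eventually (\<lambda>n. t \<le> ereal (b n)) sequentially"
    unfolding eventually_sequentially
    using N d2 le by (meson less_imp_le order.strict_trans2)
  have "(\<lambda>n. ereal (b n)) \<longlonglongrightarrow> ereal B" using blim by (simp add: tendsto_ereal)
  then show "t \<le> ereal B"
    using ev by (intro tendsto_le[OF _ _ tendsto_const]) auto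
qed


lemma ekeland:
  fixes f :: "'a::{metric_space,complete_space} \<Rightarrow> ereal"
  assumes lsc: "lower_semicont f" and ninf: "\<And>x. f x \<noteq> -\<infinity>" and bdd: "\<And>x. ereal c \<le> f x"
    and x0: "f x0 < \<infinity>" and lam: "0 < L"
  shows "\<exists>z. f z \<le> f x0 \<and> real_of_ereal (f z) + L * dist x0 z \<le> real_of_ereal (f x0)
            \<and> (\<forall>y. f z \<le> f y + ereal (L * dist z y))"
proof -
  define F where "F = (\<lambda>x. real_of_ereal (f x))"
  have fin: "f y = ereal (F y)" if "f y \<le> f x0" for y
    using that x0 ninf[of y] unfolding F_def by (cases "f y") auto
  have Fc: "c \<le> F y" if "f y \<le> f x0" for y
    using fin[OF that] bdd[of y] by simp
  define S where "S = (\<lambda>x. {y. f y \<le> f x0 \<and> F y + L * dist x y \<le> F x})"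
  have refl: "x \<in> S x" if "f x \<le> f x0" for x using that unfolding S_def by simp
  have trans: "z \<in> S x" if "y \<in> S x" "z \<in> S y" for x y z
  proof -
    have "L * dist x z \<le> L * dist x y + L * dist y z"
      using lam dist_triangle[of x z y] by (simp add: distrib_left[symmetric])
    then show ?thesis using that unfolding S_def by auto
  qed
  have bddS: "bdd_below (F ` S x)" for x
    unfolding bdd_below_def S_def using Fc by blast
  have nex: "\<exists>y. y \<in> S x \<and> F y < Inf (F ` S x) + 1 / real (Suc n)" if fx: "f x \<le> f x0" for x n
  proof -
    have "Inf (F ` S x) < Inf (F ` S x) + 1 / real (Suc n)" by simp
    then obtain v where "v \<in> F ` S x" "v < Inf (F ` S x) + 1 / real (Suc n)"
      using cInf_lessD[of "F ` S x"] refl[OF fx] by blast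
    then show ?thesis by blast
  qed
  define nxt where "nxt = (\<lambda>n x. SOME y. y \<in> S x \<and> F y < Inf (F ` S x) + 1 / real (Suc n))"
  define u where "u = rec_nat x0 nxt"
  have u0: "u 0 = x0" and uS: "u (Suc n) = nxt n (u n)" for n unfolding u_def by simp_all
  have ulev: "f (u n) \<le> f x0 \<and> (u (Suc n) \<in> S (u n) \<and> F (u (Suc n)) < Inf (F ` S (u n)) + 1 / real (Suc n))" for n
  proof (induction n)
    case 0
    have "f (u 0) \<le> f x0" using u0 by simp
    from someI_ex[OF nex[OF this, of 0]] show ?case using u0 uS[of 0] unfolding nxt_def by simp
  next
    case (Suc n)
    then have "f (u (Suc n)) \<le> f x0" unfolding S_def by auto
    from someI_ex[OF nex[OF this, of "Suc n"]] show ?case using uS[of "Suc n"] \<open>f (u (Suc n)) \<le> f x0\<close>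
      unfolding nxt_def by simp
  qed
  have mono: "u m \<in> S (u n)" if "n \<le> m" for n m
    using that
  proof (induction m rule: dec_induct)
    case base then show ?case using refl ulev by blast
  next
    case (step m) then show ?case using trans ulev by blast
  qed
  have small: "L * dist (u (Suc n)) y \<le> 1 / real (Suc n)" if "y \<in> S (u (Suc n))" for n y
  proof -
    have "y \<in> S (u n)" using trans[OF _ that] ulev by blast
    then have "Inf (F ` S (u n)) \<le> F y" using bddS by (intro cInf_lower) auto
    moreover have "F y + L * dist (u (Suc n)) y \<le> F (u (Suc n))" using that unfolding S_def by simp
    ultimately show ?thesis using ulev[of n] by linarith
  qed
  have dsmall: "dist (u m) (u m') \<le> 2 / (L * real (Suc n))" if "Suc n \<le> m" "Suc n \<le> m'" for n m m'
  proof -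
    have a: "L * dist (u (Suc n)) (u m) \<le> 1 / real (Suc n)" using small mono that by blast
    have b: "L * dist (u (Suc n)) (u m') \<le> 1 / real (Suc n)" using small mono that by blast
    have "L * dist (u m) (u m') \<le> L * dist (u (Suc n)) (u m) + L * dist (u (Suc n)) (u m')"
      using lam dist_triangle3[of "u m" "u m'" "u (Suc n)"] by (simp add: distrib_left[symmetric])
    then have "L * dist (u m) (u m') \<le> 2 / real (Suc n)" using a b by simp
    then have "dist (u m) (u m') * (L * real (Suc n)) \<le> 2" by (simp add: field_simps)
    then show ?thesis using lam by (simp add: pos_le_divide_eq)
  qed
  have "Cauchy u"
  proof (rule metric_CauchyI)
    fix e :: real assume e: "0 < e"
    then obtain n where n: "n > 0" "inverse (real n) < e * L / 2"
      using ex_inverse_of_nat_less[of "e * L / 2"] lam by auto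
    have "2 / (L * real (Suc n)) < e"
    proof -
      have "inverse (real (Suc n)) \<le> inverse (real n)" using n by (simp add: field_simps)
      then have "1 / real (Suc n) < e * L / 2" using n(2) by (metis inverse_eq_divide order.strict_trans1)
      moreover have le: "0 < L * e" using lam e by simp
      ultimately have "2 < e * (L * real (Suc n))" using lam e by (simp add: field_simps)
      moreover have "0 < L * real (Suc n)" using lam by simp
      ultimately show ?thesis by (simp add: pos_divide_less_eq)
    qed
    then show "\<exists>M. \<forall>m\<ge>M. \<forall>n\<ge>M. dist (u m) (u n) < e"
      using dsmall by (meson le_less_trans)
  qed
  then obtain z where lim: "u \<longlonglongrightarrow> z" using Cauchy_convergent convergent_def by blast
  have zS: "z \<in> S (u n)" for n
  proof -
    have lim2: "(\<lambda>k. u (k + n)) \<longlonglongrightarrow> z" using lim by (rule LIMSEQ_ignore_initial_segment)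
    have mem: "u (k + n) \<in> S (u n)" for k using mono by simp
    have "f z \<le> ereal (F x0)"
      by (rule lsc_seq[OF lsc lim2, of "\<lambda>_. F x0"]) (use mem fin[of x0] in \<open>auto simp: S_def\<close>)
    then have fz: "f z \<le> f x0" using fin[of x0] by simp
    have "f z \<le> ereal (F (u n) - L * dist (u n) z)"
    proof (rule lsc_seq[OF lsc lim2, of "\<lambda>k. F (u n) - L * dist (u n) (u (k + n))"])
      fix k show "f (u (k + n)) \<le> ereal (F (u n) - L * dist (u n) (u (k + n)))"
        using mem[of k] fin[of "u (k+n)"] unfolding S_def by auto
    next
      show "(\<lambda>k. F (u n) - L * dist (u n) (u (k + n))) \<longlonglongrightarrow> F (u n) - L * dist (u n) z"
        by (intro tendsto_intros lim2)
    qed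
    then show ?thesis using fin[OF fz] fz unfolding S_def by simp
  qed
  have main: "f z \<le> f y + ereal (L * dist z y)" for y
  proof (rule ccontr)
    assume nle: "\<not> ?thesis"
    have fz: "f z \<le> f x0" using zS[of 0] unfolding S_def by simp
    have fy: "f y \<le> f x0"
    proof (rule ccontr)
      assume "\<not> f y \<le> f x0"
      then have "f z \<le> f y" using fz by simp
      moreover have "0 \<le> ereal (L * dist z y)" using lam by simp
      ultimately show False using nle by (metis add_increasing2 add.commute)
    qed
    have "F y + L * dist z y \<le> F z" using nle fin[OF fy] fin[OF fz] by simp
    then have yS: "y \<in> S z" using fy unfolding S_def by simp
    have "dist z y = 0"
    proof (rule ccontr)
      assume "dist z y \<noteq> 0"
      then have dp: "dist z y > 0" by simp
      then obtain n where n: "n > 0" "inverse (real n) < L * dist z y / 2"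
        using ex_inverse_of_nat_less[of "L * dist z y / 2"] lam by auto
      have a: "L * dist (u (Suc n)) y \<le> 1 / real (Suc n)" using small trans[OF zS yS] by blast
      have b: "L * dist (u (Suc n)) z \<le> 1 / real (Suc n)" using small zS by blast
      have "L * dist z y \<le> L * dist (u (Suc n)) z + L * dist (u (Suc n)) y"
        using lam dist_triangle3[of z y "u (Suc n)"] by (simp add: distrib_left[symmetric])
      then have c: "L * dist z y \<le> 2 / real (Suc n)" using a b by simp
      have "inverse (real (Suc n)) \<le> inverse (real n)" using n by (simp add: field_simps)
      moreover have p: "0 < L * dist z y" using lam dp by simp
      ultimately show False using n c by (simp add: field_simps)
    qed
    then have "y = z" by simp
    then show False using nle by simp
  qed
  show ?thesis
    using zS[of 0] main u0 unfolding S_def F_def by auto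
qed


lemma ekeland_slope:
  fixes f :: "'a::{metric_space,complete_space} \<Rightarrow> ereal"
  assumes lsc: "lower_semicont f" and ninf: "\<And>x. f x \<noteq> -\<infinity>" and bdd: "\<And>x. ereal c \<le> f x"
    and x0: "f x0 < \<infinity>" and lam: "0 < L"
  shows "\<exists>z. f z \<le> f x0 \<and> real_of_ereal (f z) + L * dist x0 z \<le> real_of_ereal (f x0)
            \<and> z \<in> slope_dom f \<and> global_slope f z \<le> ereal L"
proof -
  obtain z where z: "f z \<le> f x0" "real_of_ereal (f z) + L * dist x0 z \<le> real_of_ereal (f x0)"
    "\<And>y. f z \<le> f y + ereal (L * dist z y)"
    using ekeland[OF assms] by blast
  have fz: "f z \<noteq> \<infinity>" using z(1) x0 by auto
  have sl: "global_slope f z \<le> ereal L"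
    by (rule slope_le_ereal) (use lam z(3) fz ninf in auto)
  have "z \<in> slope_dom f" unfolding slope_dom_def edom_def using fz sl
    by (auto simp: less_top[symmetric])
  then show ?thesis using z sl by blast
qed


lemma chain_bound:
  fixes f g :: "'a::{metric_space, complete_space} \<Rightarrow> ereal"
  assumes f_ninf: "\<And>x. f x \<noteq> -\<infinity>" and g_ninf: "\<And>x. g x \<noteq> -\<infinity>"
      and f_lsc: "lower_semicont f"
      and mb: "\<And>x. ereal m \<le> f x"
      and slope_le: "\<And>x. x \<in> slope_dom f \<Longrightarrow> x \<in> edom g \<and> global_slope g x \<le> global_slope f x"
      and x0: "x0 \<in> slope_dom f" and w: "w \<in> edom g" and q: "0 < q" "q < 1" and eta: "0 < \<eta>"
  shows "real_of_ereal (g x0) - real_of_ereal (g w)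
         \<le> (real_of_ereal (f x0) - m) / q + \<eta>"
proof -
  define F where "F = (\<lambda>x. real_of_ereal (f x))"
  define G where "G = (\<lambda>x. real_of_ereal (g x))"
  define s where "s = (\<lambda>x. real_of_ereal (global_slope f x))"
  have sd: "f x = ereal (F x) \<and> g x = ereal (G x) \<and> global_slope f x = ereal (s x) \<and> 0 \<le> s x
       \<and> m \<le> F x" if "x \<in> slope_dom f" for x
  proof -
    have "x \<in> edom g" using slope_le that by blast
    moreover have "0 \<le> global_slope f x" by (rule slope_nonneg)
    ultimately show ?thesis using that f_ninf[of x] g_ninf[of x] mb[of x]
      unfolding slope_dom_def edom_def F_def G_def s_def
      by (cases "f x"; cases "g x"; cases "global_slope f x") auto
  qed
  have gw: "g w = ereal (G w)" using w g_ninf[of w] unfolding edom_def G_def by (cases "g w") auto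
  have gsl: "G x - G y \<le> s x * dist x y" if "x \<in> slope_dom f" "g y = ereal (G y)" for x y
  proof -
    have "global_slope g x \<le> ereal (s x)" using slope_le[OF that(1)] sd[OF that(1)] by simp
    then have "g x - g y \<le> ereal (s x * dist x y)"
      by (rule slope_use) (use sd[OF that(1)] in auto)
    then show ?thesis using sd[OF that(1)] that(2) by simp
  qed
  have stepex: "\<exists>z. z \<in> slope_dom f \<and> F z \<le> F x \<and> q * s x * dist x z \<le> F x - F z \<and> s z \<le> q * s x"
    if xs: "x \<in> slope_dom f" for x
  proof (cases "s x = 0")
    case True then show ?thesis using xs by (intro exI[of _ x]) auto
  next
    case False
    then have L: "0 < q * s x" using sd[OF xs] q by simp
    have fx: "f x < \<infinity>" using sd[OF xs] by simp
    obtain z where z: "f z \<le> f x" "F z + q * s x * dist x z \<le> F x" "z \<in> slope_dom f"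
      "global_slope f z \<le> ereal (q * s x)"
      using ekeland_slope[OF f_lsc f_ninf mb fx L] unfolding F_def by blast
    have "s z \<le> q * s x" using z(4) sd[OF z(3)] by simp
    moreover have "F z \<le> F x" using z(2) L by (smt (verit) mult_nonneg_nonneg zero_le_dist)
    ultimately show ?thesis using z by (intro exI[of _ z]) auto
  qed
  define stp where "stp = (\<lambda>x. SOME z. z \<in> slope_dom f \<and> F z \<le> F x \<and> q * s x * dist x z \<le> F x - F z \<and> s z \<le> q * s x)"
  define u where "u = rec_nat x0 (\<lambda>_. stp)"
  have u0: "u 0 = x0" and uS: "u (Suc n) = stp (u n)" for n unfolding u_def by simp_all
  have uin: "u n \<in> slope_dom f" for n
  proof (induction n)
    case 0 then show ?case using u0 x0 by simp
  next
    case (Suc n) then show ?case using someI_ex[OF stepex[OF Suc]] uS[of n] unfolding stp_def by simp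
  qed
  have ustep: "F (u (Suc n)) \<le> F (u n) \<and> q * s (u n) * dist (u n) (u (Suc n)) \<le> F (u n) - F (u (Suc n))
      \<and> s (u (Suc n)) \<le> q * s (u n)" for n
    using someI_ex[OF stepex[OF uin[of n]]] uS[of n] unfolding stp_def by simp
  have gstep: "G (u n) - G (u (Suc n)) \<le> (F (u n) - F (u (Suc n))) / q" for n
  proof -
    have "G (u n) - G (u (Suc n)) \<le> s (u n) * dist (u n) (u (Suc n))"
      using gsl[OF uin[of n]] sd[OF uin[of "Suc n"]] by blast
    also have "\<dots> \<le> (F (u n) - F (u (Suc n))) / q"
      using ustep[of n] q by (simp add: field_simps)
    finally show ?thesis .
  qed
  have gchain: "G x0 - G (u M) \<le> (F x0 - F (u M)) / q" for M
  proof (induction M)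
    case 0 then show ?case using u0 by simp
  next
    case (Suc M)
    then show ?case using gstep[of M] by (simp add: diff_divide_distrib)
  qed
  define b where "b = (\<lambda>n. s (u n) * dist (u n) w)"
  have b0: "0 \<le> b n" for n unfolding b_def using sd[OF uin[of n]] by simp
  have bstep: "b (Suc n) \<le> q * b n + (F (u n) - F (u (Suc n)))" for n
  proof -
    have "b (Suc n) \<le> (q * s (u n)) * (dist (u n) w + dist (u n) (u (Suc n)))"
      unfolding b_def
    proof (rule mult_mono)
      show "dist (u (Suc n)) w \<le> dist (u n) w + dist (u n) (u (Suc n))"
        by (metis dist_commute dist_triangle add.commute)
    qed (use ustep[of n] sd[OF uin[of n]] q in auto)
    also have "\<dots> = q * b n + q * s (u n) * dist (u n) (u (Suc n))"
      unfolding b_def by (simp add: algebra_simps)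
    also have "\<dots> \<le> q * b n + (F (u n) - F (u (Suc n)))" using ustep[of n] by simp
    finally show ?thesis .
  qed
  have "\<exists>N. b N < \<eta>"
  proof (rule ccontr)
    assume "\<not> ?thesis"
    then have ge: "\<eta> \<le> b n" for n by (simp add: not_less)
    have ind: "b M + (1 - q) * \<eta> * real M \<le> b 0 + F x0 - F (u M)" for M
    proof (induction M)
      case 0 then show ?case using u0 by simp
    next
      case (Suc M)
      have "(1 - q) * \<eta> \<le> (1 - q) * b M" using ge[of M] q by (intro mult_left_mono) auto
      then show ?case using Suc bstep[of M] by (simp add: algebra_simps)
    qed
    obtain M where M: "(b 0 + F x0 - m) / ((1 - q) * \<eta>) < real M" using reals_Archimedean2 by blast
    have pos: "0 < (1 - q) * \<eta>" using q eta by simp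
    have "(1 - q) * \<eta> * real M \<le> b 0 + F x0 - m"
      using ind[of M] b0[of M] sd[OF uin[of M]] by linarith
    then show False using M pos by (simp add: pos_divide_less_eq mult.commute)
  qed
  then obtain N where N: "b N < \<eta>" by blast
  have "G (u N) - G w \<le> b N" unfolding b_def using gsl[OF uin[of N] gw] by simp
  moreover have "(F x0 - F (u N)) / q \<le> (F x0 - m) / q"
    using sd[OF uin[of N]] q by (simp add: divide_right_mono)
  ultimately have "G x0 - G w \<le> (F x0 - m) / q + \<eta>" using gchain[of N] N by linarith
  then show ?thesis unfolding F_def G_def .
qed


theorem theorem3p3:
  fixes f g :: "'a::{metric_space, complete_space} \<Rightarrow> ereal"
  assumes f_nonneginf: "\<And>x. f x \<noteq> -\<infinity>"
      and g_nonneginf: "\<And>x. g x \<noteq> -\<infinity>"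
      and f_proper: "edom f \<noteq> {}"
      and g_proper: "edom g \<noteq> {}"
      and f_lsc: "lower_semicont f"
      and g_lsc: "lower_semicont g"
      and f_bdd: "\<exists>c::real. \<forall>x. ereal c \<le> f x"
      and slope_le: "\<And>x. x \<in> slope_dom f \<Longrightarrow> x \<in> edom g \<and> global_slope g x \<le> global_slope f x"
  shows "(INF x\<in>edom f. f x - g x) \<ge> (INF x. f x) - (INF x. g x)
         \<and> (INF x. g x) > -\<infinity>
         \<and> (\<forall>x. f x - (INF y. f y) \<ge> g x - (INF y. g y))"
proof -
  define F where "F = (\<lambda>x. real_of_ereal (f x))"
  define G where "G = (\<lambda>x. real_of_ereal (g x))"
  obtain c where c: "\<And>x. ereal c \<le> f x" using f_bdd by blast
  obtain x1 where x1: "x1 \<in> edom f" using f_proper by blast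
  obtain w1 where w1: "w1 \<in> edom g" using g_proper by blast
  have fdom: "f x = ereal (F x)" if "x \<in> edom f" for x
    using that f_nonneginf[of x] unfolding edom_def F_def by (cases "f x") auto
  have gdom: "g x = ereal (G x)" if "x \<in> edom g" for x
    using that g_nonneginf[of x] unfolding edom_def G_def by (cases "g x") auto
  have "ereal c \<le> (INF x. f x)" using c by (rule INF_greatest)
  moreover have "(INF x. f x) \<le> f x1" by (rule INF_lower) simp
  ultimately obtain m where m: "(INF x. f x) = ereal m"
    using x1 unfolding edom_def by (cases "INF x. f x") auto
  have mb: "ereal m \<le> f x" for x using m INF_lower[of x UNIV f] by simp
  have Fm: "m \<le> F x" if "x \<in> edom f" for x using mb[of x] fdom[OF that] by simp
  have bound1: "G x0 - G w \<le> F x0 - m" if x0: "x0 \<in> slope_dom f" and w: "w \<in> edom g" for x0 w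
  proof (rule field_le_epsilon)
    fix e :: real assume e: "0 < e"
    have x0f: "x0 \<in> edom f" using x0 unfolding slope_dom_def by simp
    define A where "A = F x0 - m"
    have A0: "0 \<le> A" using Fm[OF x0f] unfolding A_def by simp
    define t where "t = e / (2 * (A + 1))"
    have t0: "0 < t" unfolding t_def using e A0 by simp
    define q where "q = 1 / (1 + t)"
    have q: "0 < q" "q < 1" unfolding q_def using t0 by auto
    have "G x0 - G w \<le> A / q + e / 2"
      using chain_bound[OF f_nonneginf g_nonneginf f_lsc mb slope_le x0 w q, of "e/2"] e
      unfolding A_def F_def G_def by simp
    also have "A / q = A + A * t" unfolding q_def by (simp add: algebra_simps)
    also have "A * t \<le> e / 2"
    proof -
      have "A * t = e / 2 * (A / (A + 1))" unfolding t_def using A0 by (simp add: field_simps)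
      also have "\<dots> \<le> e / 2 * 1" using e A0 by (intro mult_left_mono) auto
      finally show ?thesis by simp
    qed
    finally show "G x0 - G w \<le> F x0 - m + e" unfolding A_def by simp
  qed
  obtain x0 where x0: "x0 \<in> slope_dom f"
    using ekeland_slope[OF f_lsc f_nonneginf c, of x1 1] x1 unfolding edom_def by auto
  have glow: "ereal (G x0 - (F x0 - m)) \<le> g w" for w
  proof (cases "w \<in> edom g")
    case True then show ?thesis using bound1[OF x0 True] gdom[OF True] by simp
  next
    case False then show ?thesis unfolding edom_def by simp
  qed
  have "ereal (G x0 - (F x0 - m)) \<le> (INF x. g x)" using glow by (rule INF_greatest)
  moreover have "(INF x. g x) \<le> g w1" by (rule INF_lower) simp
  ultimately obtain mg where mg: "(INF x. g x) = ereal mg"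
    using w1 unfolding edom_def by (cases "INF x. g x") auto
  have bound2: "G x0 - mg \<le> F x0 - m" if x0: "x0 \<in> slope_dom f" for x0
  proof -
    have "ereal (G x0 - (F x0 - m)) \<le> g w" for w
    proof (cases "w \<in> edom g")
      case True then show ?thesis using bound1[OF x0 True] gdom[OF True] by simp
    next
      case False then show ?thesis unfolding edom_def by simp
    qed
    then have "ereal (G x0 - (F x0 - m)) \<le> (INF x. g x)" by (rule INF_greatest)
    then show ?thesis using mg by simp
  qed
  have bound3: "g x \<le> ereal (mg + F x - m)" if x: "x \<in> edom f" for x
  proof (rule dense_le)
    fix y assume y: "y < g x"
    with g_lsc have "y < Liminf (at x) g" unfolding lower_semicont_def by (metis less_le_trans)
    then have "eventually (\<lambda>u. y < g u) (at x)"
      using le_Liminf_iff[THEN iffD1, OF order_refl] by blast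
    then obtain d where d: "d > 0" "\<And>u. u \<noteq> x \<and> dist u x < d \<longrightarrow> y < g u"
      unfolding eventually_at by auto
    define L where "L = (F x - m) / d + 1"
    have "0 \<le> (F x - m) / d" using Fm[OF x] d(1) by simp
    then have L: "0 < L" unfolding L_def by linarith
    have fx: "f x < \<infinity>" using x unfolding edom_def by simp
    obtain z where z: "f z \<le> f x" "F z + L * dist x z \<le> F x" "z \<in> slope_dom f"
      using ekeland_slope[OF f_lsc f_nonneginf mb fx L] unfolding F_def by blast
    have zf: "z \<in> edom f" using z(3) unfolding slope_dom_def by simp
    have zg: "z \<in> edom g" using slope_le[OF z(3)] by simp
    have "L * dist x z \<le> F x - m" using z(2) Fm[OF zf] by simp
    also have "\<dots> < L * d" unfolding L_def using d(1) by (simp add: field_simps)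
    finally have dz: "dist z x < d" using L by (simp add: dist_commute)
    have "G z \<le> mg + F x - m"
      using bound2[OF z(3)] z(2) L by (smt (verit) mult_nonneg_nonneg zero_le_dist)
    then have gz: "g z \<le> ereal (mg + F x - m)" using gdom[OF zg] by simp
    show "y \<le> ereal (mg + F x - m)"
    proof (cases "z = x")
      case True then show ?thesis using y gz by simp
    next
      case False then show ?thesis using d(2)[of z] dz gz by simp
    qed
  qed
  have key: "x \<in> edom g \<and> G x - mg \<le> F x - m" if x: "x \<in> edom f" for x
    using bound3[OF x] g_nonneginf[of x] unfolding G_def edom_def
    by (cases "g x") auto
  show ?thesis
  proof (intro conjI allI)
    show "(INF x. f x) - (INF x. g x) \<le> (INF x\<in>edom f. f x - g x)"
    proof (rule INF_greatest)
      fix x assume x: "x \<in> edom f"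
      have gx: "g x = ereal (G x)" using key[OF x] g_nonneginf[of x] unfolding G_def edom_def
        by (cases "g x") auto
      show "(INF x. f x) - (INF x. g x) \<le> f x - g x"
        using key[OF x] fdom[OF x] gx m mg by simp
    qed
    show "- \<infinity> < (INF x. g x)" using mg by simp
    fix x
    show "g x - (INF y. g y) \<le> f x - (INF y. f y)"
    proof (cases "x \<in> edom f")
      case True
      have gx: "g x = ereal (G x)" using key[OF True] g_nonneginf[of x] unfolding G_def edom_def
        by (cases "g x") auto
      then show ?thesis using key[OF True] fdom[OF True] m mg by simp
    next
      case False
      then have "f x = \<infinity>" unfolding edom_def by simp
      then show ?thesis using m by simp
    qed
  qed
qed

end
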